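(* Let $S$ be a linear subspace of $\mathbb{F}_2^n$ of dimension $d\le 5$, and let $Q:\mathbb{F}_2^n\to\mathbb{F}_2$ be a quadratic function. If there exist complex phases $c_1,\dots,c_n$ (complex numbers of modulus $1$) such that $(-1)^{Q(x)}=\prod_{j=1}^n c_j^{x_j}$ for every $x\in S$, then there exist $c'_1,\dots,c'_n\in\{\pm1,\pm i\}$ such that $(-1)^{Q(x)}=\prod_{j=1}^n (c'_j)^{x_j}$ for every $x\in S$.
   Context: A quadratic function $Q:\mathbb{F}_2^n\to\mathbb{F}_2$ is a polynomial of degree at most $2$ in the coordinates $x_1,\dots,x_n$ with coefficients in $\mathbb{F}_2$. The coordinates $x_j\in\{0,1\}$ are used as integer exponents. *)

theory Defs
  imports "HOL-Analysis.Analysis" "HOL-Library.Z2"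
begin

text \<open>F_2^n is modelled as bit ^ 'n (coordinates indexed by a finite type 'n, n = CARD('n)),
  as a vector space over the field bit = F_2 with scalar multiplication *s.\<close>

definition F2_subspace :: "(bit ^ 'n) set \<Rightarrow> bool" where
  "F2_subspace S \<longleftrightarrow> module.subspace ((*s) :: bit \<Rightarrow> bit ^ 'n \<Rightarrow> bit ^ 'n) S"

definition F2_dim :: "(bit ^ 'n) set \<Rightarrow> nat" where
  "F2_dim S = vector_space.dim ((*s) :: bit \<Rightarrow> bit ^ 'n \<Rightarrow> bit ^ 'n) S"

definition is_quadratic :: "(bit ^ 'n \<Rightarrow> bit) \<Rightarrow> bool" where
  "is_quadratic Q \<longleftrightarrow> (\<exists>(a0::bit) (a::'n \<Rightarrow> bit) (b::'n \<Rightarrow> 'n \<Rightarrow> bit).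
     \<forall>x. Q x = a0 + (\<Sum>i\<in>UNIV. a i * x $ i) + (\<Sum>i\<in>UNIV. \<Sum>j\<in>UNIV. b i j * x $ i * x $ j))"

end

theory Submission
  imports Defs
begin


definition inZ :: "real \<Rightarrow> real \<Rightarrow> bool" where
  "inZ r x \<longleftrightarrow> (\<exists>z::int. x = r * of_int z)"

lemma inZ_0[simp]: "inZ r 0" unfolding inZ_def by (rule exI[of _ 0]) simp
lemma inZ_add: "inZ r x \<Longrightarrow> inZ r y \<Longrightarrow> inZ r (x + y)"
  unfolding inZ_def by (auto simp: algebra_simps) (metis of_int_add distrib_left)
lemma inZ_neg: "inZ r x \<Longrightarrow> inZ r (- x)"
  unfolding inZ_def by (auto) (metis mult_minus_right of_int_minus)
lemma inZ_diff: "inZ r x \<Longrightarrow> inZ r y \<Longrightarrow> inZ r (x - y)"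
  using inZ_add[of r x "-y"] inZ_neg[of r y] by simp
lemma inZ_sum: "(\<And>i. i \<in> A \<Longrightarrow> inZ r (f i)) \<Longrightarrow> inZ r (sum f A)"
  by (induction A rule: infinite_finite_induct) (auto intro: inZ_add)
lemma inZ_intmult: "inZ r x \<Longrightarrow> inZ r (of_int c * x)"
  unfolding inZ_def by auto (metis mult.left_commute of_int_mult)
lemma inZ_scale: "inZ r x \<Longrightarrow> inZ (c * r) (c * x)"
  unfolding inZ_def by auto
lemma inZ_unscale: "inZ (c * r) (c * x) \<Longrightarrow> c \<noteq> 0 \<Longrightarrow> inZ r x"
  unfolding inZ_def by auto
lemma inZ_coarse: "inZ (r * of_int d) x \<Longrightarrow> inZ r x"
  unfolding inZ_def by auto (metis mult.assoc of_int_mult)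
lemma inZ_int[simp]: "inZ 1 (of_int z)"
  unfolding inZ_def by auto
lemma inZ_1_iff: "inZ 1 x \<longleftrightarrow> x \<in> \<int>"
  unfolding inZ_def Ints_def by auto

lemma sum_Pow_insert:
  assumes "finite K" "a \<notin> K"
  shows "(\<Sum>L\<in>Pow (insert a K). f L) = (\<Sum>L\<in>Pow K. f L) + (\<Sum>L\<in>Pow K. f (insert a L))"
proof -
  have inj: "inj_on (insert a) (Pow K)"
    using assms(2) unfolding inj_on_def by (metis Pow_iff insert_ident subsetD)
  have disj: "Pow K \<inter> insert a ` Pow K = {}" using assms(2) by auto
  have "(\<Sum>L\<in>Pow (insert a K). f L) = (\<Sum>L\<in>Pow K \<union> insert a ` Pow K. f L)"
    by (simp add: Pow_insert)
  also have "\<dots> = (\<Sum>L\<in>Pow K. f L) + (\<Sum>L\<in>insert a ` Pow K. f L)"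
    by (rule sum.union_disjoint) (use assms disj in auto)
  also have "(\<Sum>L\<in>insert a ` Pow K. f L) = (\<Sum>L\<in>Pow K. f (insert a L))"
    by (rule sum.reindex[OF inj, unfolded comp_def])
  finally show ?thesis .
qed

lemma W_lemma:
  assumes "finite K"
  shows "(\<Sum>L\<in>Pow K. (-2::real) ^ card L * of_bool (L \<subseteq> P)) = (-1) ^ card (K \<inter> P)"
  using assms
proof (induction K rule: finite_induct)
  case empty then show ?case by simp
next
  case (insert a K)
  have c: "card (insert a L) = Suc (card L)" if "L \<in> Pow K" for L
    using insert that by (meson PowD finite_subset card_insert_disjoint subsetD)
  have "(\<Sum>L\<in>Pow (insert a K). (-2::real) ^ card L * of_bool (L \<subseteq> P))
      = (\<Sum>L\<in>Pow K. (-2::real) ^ card L * of_bool (L \<subseteq> P))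
        + (\<Sum>L\<in>Pow K. (-2::real) ^ card (insert a L) * of_bool (insert a L \<subseteq> P))"
    by (rule sum_Pow_insert) (use insert in auto)
  also have "(\<Sum>L\<in>Pow K. (-2::real) ^ card (insert a L) * of_bool (insert a L \<subseteq> P))
      = (\<Sum>L\<in>Pow K. (-2) * of_bool (a \<in> P) * ((-2::real) ^ card L * of_bool (L \<subseteq> P)))"
    by (rule sum.cong[OF refl]) (simp add: c)
  also have "\<dots> = (-2) * of_bool (a \<in> P) * (\<Sum>L\<in>Pow K. (-2::real) ^ card L * of_bool (L \<subseteq> P))"
    by (simp add: sum_distrib_left)
  finally have 1: "(\<Sum>L\<in>Pow (insert a K). (-2::real) ^ card L * of_bool (L \<subseteq> P))
      = (1 - 2 * of_bool (a \<in> P)) * (-1) ^ card (K \<inter> P)"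
    using insert.IH by (simp add: algebra_simps)
  have "card (insert a K \<inter> P) = (if a \<in> P then Suc (card (K \<inter> P)) else card (K \<inter> P))"
    using insert by (simp add: Int_insert_left card_insert_if)
  then show ?case using 1 by auto
qed

lemma par_expand:
  assumes "finite K"
  shows "(of_bool (odd (card (K \<inter> P))) :: real)
     = (\<Sum>L\<in>Pow K. if L = {} then 0 else (-2) ^ (card L - 1) * of_bool (L \<subseteq> P))"
proof -
  have "(\<Sum>L\<in>Pow K. (-2::real) ^ card L * of_bool (L \<subseteq> P))
      = (\<Sum>L\<in>Pow K. (if L = {} then 1 else 0) + (-2) * (if L = {} then 0 else (-2) ^ (card L - 1) * of_bool (L \<subseteq> P)))"
  proof (rule sum.cong[OF refl])
    fix L assume "L \<in> Pow K"
    then have "finite L" using assms finite_subset by auto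
    then show "(-2::real) ^ card L * of_bool (L \<subseteq> P) = (if L = {} then 1 else 0) + (-2) * (if L = {} then 0 else (-2) ^ (card L - 1) * of_bool (L \<subseteq> P))"
      by (cases "L = {}") (auto simp: power_eq_if)
  qed
  also have "\<dots> = 1 + (-2) * (\<Sum>L\<in>Pow K. if L = {} then 0 else (-2) ^ (card L - 1) * of_bool (L \<subseteq> P))"
  proof -
    have "(\<Sum>L\<in>Pow K. (if L = {} then 1 else 0::real)) = 1"
      using assms by (simp add: sum.delta)
    then show ?thesis by (simp only: sum.distrib sum_distrib_left[symmetric])
  qed
  finally show ?thesis using W_lemma[OF assms, of P]
    by (cases "odd (card (K \<inter> P))") (auto simp: algebra_simps)
qed


lemma sum_pow1: "(\<Sum>M\<in>Pow {c}. f M) = f {} + f {c}"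
  by (simp add: Pow_insert add.commute)

lemma sum_pow3:
  assumes "a \<noteq> b" "a \<noteq> c" "b \<noteq> c"
  shows "(\<Sum>M\<in>Pow {a,b,c}. f M) = f {} + f {a} + f {b} + f {c} + f {a,b} + f {a,c} + f {b,c} + f {a,b,c}"
proof -
  have "(\<Sum>M\<in>Pow {a,b,c}. f M) = (\<Sum>M\<in>Pow {b,c}. f M) + (\<Sum>M\<in>Pow {b,c}. f (insert a M))"
    by (rule sum_Pow_insert) (use assms in auto)
  also have "(\<Sum>M\<in>Pow {b,c}. f M) = (\<Sum>M\<in>Pow {c}. f M) + (\<Sum>M\<in>Pow {c}. f (insert b M))"
    by (rule sum_Pow_insert) (use assms in auto)
  also have "(\<Sum>M\<in>Pow {b,c}. f (insert a M)) = (\<Sum>M\<in>Pow {c}. f (insert a M)) + (\<Sum>M\<in>Pow {c}. f (insert a (insert b M)))"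
    by (rule sum_Pow_insert) (use assms in auto)
  finally show ?thesis by (simp add: sum_pow1 insert_commute ac_simps)
qed

lemma sum_supsets:
  fixes f :: "'a set \<Rightarrow> 'b::comm_ring_1"
  assumes "finite U" "L \<subseteq> U"
  shows "(\<Sum>R\<in>Pow U. of_bool (L \<subseteq> R) * f R) = (\<Sum>M\<in>Pow (U - L). f (L \<union> M))"
proof -
  have eq: "{R \<in> Pow U. L \<subseteq> R} = (\<lambda>M. L \<union> M) ` Pow (U - L)"
    using assms by (auto simp: image_iff)
  have inj: "inj_on (\<lambda>M. L \<union> M) (Pow (U - L))"
    unfolding inj_on_def by blast
  have "(\<Sum>R\<in>Pow U. of_bool (L \<subseteq> R) * f R) = (\<Sum>R\<in>{R \<in> Pow U. L \<subseteq> R}. f R)"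
  proof -
    have "(\<Sum>R\<in>Pow U. of_bool (L \<subseteq> R) * f R) = (\<Sum>R\<in>Pow U. if L \<subseteq> R then f R else 0)"
      by (rule sum.cong[OF refl]) auto
    also have "\<dots> = (\<Sum>R\<in>{R \<in> Pow U. L \<subseteq> R}. f R)"
      by (rule sum.inter_filter[symmetric]) (use assms in simp)
    finally show ?thesis .
  qed
  also have "\<dots> = (\<Sum>M\<in>Pow (U - L). f (L \<union> M))"
    unfolding eq by (rule sum.reindex[OF inj, unfolded comp_def])
  finally show ?thesis .
qed

lemma ceil_half: "real_of_int \<lceil>real_of_int m / 2\<rceil> = real_of_int (- ((- m) div 2))"
proof -
  have "\<lceil>real_of_int m / 2\<rceil> = - \<lfloor>real_of_int (- m) / 2\<rfloor>" by (simp add: ceiling_def)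
  also have "\<lfloor>real_of_int (- m) / 2\<rfloor> = (- m) div 2"
    using floor_divide_of_int_eq[of "- m" 2] by simp
  finally show ?thesis by simp
qed

lemma seven:
  fixes ta tb tc tab tac tbc tabc :: real
  assumes h0: "inZ 1 (ta+tb+tc+tab+tac+tbc+tabc)"
    and ha: "inZ 1 (ta+tab+tac+tabc)" and hb: "inZ 1 (tb+tab+tbc+tabc)" and hc: "inZ 1 (tc+tac+tbc+tabc)"
    and hab: "inZ 1 (2*(tab+tabc))" and hac: "inZ 1 (2*(tac+tabc))" and hbc: "inZ 1 (2*(tbc+tabc))"
  shows "inZ 2 ((\<lceil>ta\<rceil> - ta) + (\<lceil>tb\<rceil> - tb) + (\<lceil>tc\<rceil> - tc) + (\<lceil>tab\<rceil> - tab)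
           + (\<lceil>tac\<rceil> - tac) + (\<lceil>tbc\<rceil> - tbc) + (\<lceil>tabc\<rceil> - tabc))"
proof -
  from h0 obtain z0 where z0: "ta+tb+tc+tab+tac+tbc+tabc = of_int z0" unfolding inZ_def by auto
  from ha obtain za where za: "ta+tab+tac+tabc = of_int za" unfolding inZ_def by auto
  from hb obtain zb where zb: "tb+tab+tbc+tabc = of_int zb" unfolding inZ_def by auto
  from hc obtain zc where zc: "tc+tac+tbc+tabc = of_int zc" unfolding inZ_def by auto
  from hab obtain wab where wab: "2*(tab+tabc) = of_int wab" unfolding inZ_def by auto
  from hac obtain wac where wac: "2*(tac+tabc) = of_int wac" unfolding inZ_def by auto
  from hbc obtain wbc where wbc: "2*(tbc+tabc) = of_int wbc" unfolding inZ_def by auto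
  define e where "e = 2*z0 - 2*(za+zb+zc) + wab + wac + wbc"
  have tabc: "tabc = of_int e / 2" using z0 za zb zc wab wac wbc unfolding e_def by (simp add: field_simps)
  have tab: "tab = of_int (wab - e) / 2" using wab tabc by (simp add: field_simps)
  have tac: "tac = of_int (wac - e) / 2" using wac tabc by (simp add: field_simps)
  have tbc: "tbc = of_int (wbc - e) / 2" using wbc tabc by (simp add: field_simps)
  have ta: "ta = of_int (2*za - wab - wac + e) / 2" using za tab tac tabc by (simp add: field_simps)
  have tb: "tb = of_int (2*zb - wab - wbc + e) / 2" using zb tab tbc tabc by (simp add: field_simps)
  have tc: "tc = of_int (2*zc - wac - wbc + e) / 2" using zc tac tbc tabc by (simp add: field_simps)
  define c where "c m = - ((- m) div 2)" for m :: int
  define X where "X = c (2*za - wab - wac + e) + c (2*zb - wab - wbc + e) + c (2*zc - wac - wbc + e)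
     + c (wab - e) + c (wac - e) + c (wbc - e) + c e"
  define Y where "Y = (2*za - wab - wac + e) + (2*zb - wab - wbc + e) + (2*zc - wac - wbc + e)
     + (wab - e) + (wac - e) + (wbc - e) + e"
  have cm: "2 * c m - m = of_bool (odd m)" for m
  proof -
    have "2 * c m - m = m mod 2" unfolding c_def by presburger
    then show ?thesis by (simp add: of_bool_odd_eq_mod_2)
  qed
  have "2 * X - Y = of_bool (odd (2*za - wab - wac + e)) + of_bool (odd (2*zb - wab - wbc + e))
     + of_bool (odd (2*zc - wac - wbc + e)) + of_bool (odd (wab - e)) + of_bool (odd (wac - e))
     + of_bool (odd (wbc - e)) + of_bool (odd e)"
    unfolding X_def Y_def cm[symmetric] by simp
  moreover have "odd e \<longleftrightarrow> (odd wab \<noteq> (odd wac \<noteq> odd wbc))"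
    by (cases "even wab"; cases "even wac"; cases "even wbc"; simp add: e_def)
  ultimately have "4 dvd (2 * X - Y)"
    by (cases "odd wab"; cases "odd wac"; cases "odd wbc") simp_all
  then obtain z where z: "2 * X - Y = 4 * z" by blast
  have "(\<lceil>ta\<rceil> - ta) + (\<lceil>tb\<rceil> - tb) + (\<lceil>tc\<rceil> - tc) + (\<lceil>tab\<rceil> - tab)
           + (\<lceil>tac\<rceil> - tac) + (\<lceil>tbc\<rceil> - tbc) + (\<lceil>tabc\<rceil> - tabc) = of_int X - of_int Y / 2"
    unfolding ta tb tc tab tac tbc tabc X_def Y_def c_def ceil_half by (simp add: field_simps)
  also have "\<dots> = 2 * of_int z" using z by (simp add: field_simps)
  finally show ?thesis unfolding inZ_def by auto
qed


lemma sum_supsets_if: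
  fixes f :: "nat set \<Rightarrow> real"
  assumes "L' \<subseteq> {..<5}" "L \<subseteq> L'"
  shows "(\<Sum>R\<in>Pow {..<5}. of_bool (L' \<subseteq> R) * f R) = (\<Sum>M\<in>Pow ({..<5} - L). of_bool (L' \<subseteq> L \<union> M) * f (L \<union> M))"
proof -
  have "(\<Sum>R\<in>Pow {..<5}. of_bool (L' \<subseteq> R) * f R) = (\<Sum>R\<in>Pow {..<5}. of_bool (L \<subseteq> R) * (of_bool (L' \<subseteq> R) * f R))"
    by (rule sum.cong[OF refl]) (use assms in auto)
  also have "\<dots> = (\<Sum>M\<in>Pow ({..<5} - L). of_bool (L' \<subseteq> L \<union> M) * f (L \<union> M))"
    by (rule sum_supsets) (use assms in auto)
  finally show ?thesis .
qed

lemma pair_core: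
  fixes T :: "nat set \<Rightarrow> real" and G :: "nat set \<Rightarrow> real"
  assumes Gdef: "\<And>L. L \<subseteq> {..<5} \<Longrightarrow> G L = (\<Sum>R\<in>Pow {..<5}. of_bool (L \<subseteq> R) * T R)"
    and P3: "\<And>L. L \<subseteq> {..<5} \<Longrightarrow> 3 \<le> card L \<Longrightarrow> inZ 4 ((-2) ^ (card L - 1) * G L)"
    and G2: "inZ 1 (G {k,l})"
    and kl: "k < 5" "l < 5" "k \<noteq> l" and T0: "T {k,l} = 0"
  shows "inZ 2 ((\<Sum>R\<in>Pow {..<5}. of_bool ({k,l} \<subseteq> R) * real_of_int (if 3 \<le> card R then \<lceil>T R\<rceil> else 0)) - G {k,l})"
proof -
  define L where "L = {k,l}"
  define D where "D = {..<5::nat} - L"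
  have LU: "L \<subseteq> {..<5}" using kl unfolding L_def by auto
  have "card D = 3" unfolding D_def using LU kl by (simp add: card_Diff_subset L_def)
  then obtain a b c where abc: "D = {a,b,c}" "a \<noteq> b" "a \<noteq> c" "b \<noteq> c" by (auto simp: card_3_iff)
  have aL: "a \<notin> L" "b \<notin> L" "c \<notin> L" "a < 5" "b < 5" "c < 5" using abc unfolding D_def by auto
  then have dist: "a \<noteq> k" "a \<noteq> l" "b \<noteq> k" "b \<noteq> l" "c \<noteq> k" "c \<noteq> l" unfolding L_def by auto
  note ds = dist abc(2-4) kl(3) dist[symmetric] abc(2-4)[symmetric] kl(3)[symmetric]
  define fT where "fT L' M = of_bool (L' \<subseteq> L \<union> M) * T (L \<union> M)" for L' M
  have GM: "G L' = fT L' {} + fT L' {a} + fT L' {b} + fT L' {c} + fT L' {a,b} + fT L' {a,c} + fT L' {b,c} + fT L' {a,b,c}"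
    if "L \<subseteq> L'" "L' \<subseteq> {..<5}" for L'
  proof -
    have "G L' = (\<Sum>M\<in>Pow {a,b,c}. fT L' M)"
      using Gdef[OF that(2)] sum_supsets_if[OF that(2,1), of T] abc(1) unfolding D_def fT_def by simp
    then show ?thesis by (simp only: sum_pow3[OF abc(2-4)])
  qed
  have G3: "inZ 1 (G L')" if "L' \<subseteq> {..<5}" "card L' = 3" for L'
  proof -
    have "inZ 4 (4 * G L')" using P3[OF that(1)] that(2) by simp
    then show ?thesis using inZ_unscale[of 4 1 "G L'"] by simp
  qed
  have G4: "inZ 1 (2 * G L')" if "L' \<subseteq> {..<5}" "card L' = 4" for L'
  proof -
    have "inZ 4 (-8 * G L')" using P3[OF that(1)] that(2) by simp
    then have "inZ 4 (8 * G L')" using inZ_neg by fastforce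
    then have "inZ (4 * 1) (4 * (2 * G L'))" by (simp add: mult.assoc)
    then show ?thesis by (rule inZ_unscale) simp
  qed
  let ?ta = "T {a,k,l}" and ?tb = "T {b,k,l}" and ?tc = "T {c,k,l}"
  let ?tab = "T {a,b,k,l}" and ?tac = "T {a,c,k,l}" and ?tbc = "T {b,c,k,l}" and ?tabc = "T {a,b,c,k,l}"
  have h0: "inZ 1 (?ta + ?tb + ?tc + ?tab + ?tac + ?tbc + ?tabc)"
  proof -
    have "G L = ?ta + ?tb + ?tc + ?tab + ?tac + ?tbc + ?tabc"
      using GM[OF order_refl LU] T0 unfolding L_def by (simp add: fT_def L_def ds insert_commute)
    then show ?thesis using G2 unfolding L_def by simp
  qed
  have ha: "inZ 1 (?ta + ?tab + ?tac + ?tabc)"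
  proof -
    have "G {a,k,l} = ?ta + ?tab + ?tac + ?tabc"
      using GM[of "{a,k,l}"] aL kl unfolding L_def by (simp add: fT_def L_def ds insert_commute)
    then show ?thesis using G3[of "{a,k,l}"] aL kl ds by simp
  qed
  have hb: "inZ 1 (?tb + ?tab + ?tbc + ?tabc)"
  proof -
    have "G {b,k,l} = ?tb + ?tab + ?tbc + ?tabc"
      using GM[of "{b,k,l}"] aL kl unfolding L_def by (simp add: fT_def L_def ds insert_commute)
    then show ?thesis using G3[of "{b,k,l}"] aL kl ds by simp
  qed
  have hc: "inZ 1 (?tc + ?tac + ?tbc + ?tabc)"
  proof -
    have "G {c,k,l} = ?tc + ?tac + ?tbc + ?tabc"
      using GM[of "{c,k,l}"] aL kl unfolding L_def by (simp add: fT_def L_def ds insert_commute)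
    then show ?thesis using G3[of "{c,k,l}"] aL kl ds by simp
  qed
  have hab: "inZ 1 (2 * (?tab + ?tabc))"
  proof -
    have "G {a,b,k,l} = ?tab + ?tabc"
      using GM[of "{a,b,k,l}"] aL kl unfolding L_def by (simp add: fT_def L_def ds insert_commute)
    then show ?thesis using G4[of "{a,b,k,l}"] aL kl ds by simp
  qed
  have hac: "inZ 1 (2 * (?tac + ?tabc))"
  proof -
    have "G {a,c,k,l} = ?tac + ?tabc"
      using GM[of "{a,c,k,l}"] aL kl unfolding L_def by (simp add: fT_def L_def ds insert_commute)
    then show ?thesis using G4[of "{a,c,k,l}"] aL kl ds by simp
  qed
  have hbc: "inZ 1 (2 * (?tbc + ?tabc))"
  proof -
    have "G {b,c,k,l} = ?tbc + ?tabc"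
      using GM[of "{b,c,k,l}"] aL kl unfolding L_def by (simp add: fT_def L_def ds insert_commute)
    then show ?thesis using G4[of "{b,c,k,l}"] aL kl ds by simp
  qed
  have U3: "(\<Sum>R\<in>Pow {..<5}. of_bool ({k,l} \<subseteq> R) * real_of_int (if 3 \<le> card R then \<lceil>T R\<rceil> else 0))
     = \<lceil>?ta\<rceil> + \<lceil>?tb\<rceil> + \<lceil>?tc\<rceil> + \<lceil>?tab\<rceil> + \<lceil>?tac\<rceil> + \<lceil>?tbc\<rceil> + \<lceil>?tabc\<rceil>"
  proof -
    define g where "g M = of_bool (L \<subseteq> L \<union> M) * real_of_int (if 3 \<le> card (L \<union> M) then \<lceil>T (L \<union> M)\<rceil> else 0)" for M
    have "(\<Sum>R\<in>Pow {..<5}. of_bool ({k,l} \<subseteq> R) * real_of_int (if 3 \<le> card R then \<lceil>T R\<rceil> else 0))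
       = (\<Sum>M\<in>Pow {a,b,c}. g M)"
      using sum_supsets_if[OF LU order_refl, of "\<lambda>R. real_of_int (if 3 \<le> card R then \<lceil>T R\<rceil> else 0)"] abc(1)
      unfolding D_def L_def g_def by simp
    also have "\<dots> = g {} + g {a} + g {b} + g {c} + g {a,b} + g {a,c} + g {b,c} + g {a,b,c}"
      by (simp only: sum_pow3[OF abc(2-4)])
    finally show ?thesis unfolding g_def L_def by (simp add: ds insert_commute)
  qed
  have GL: "G {k,l} = ?ta + ?tb + ?tc + ?tab + ?tac + ?tbc + ?tabc"
    using GM[OF order_refl LU] T0 unfolding L_def by (simp add: fT_def L_def ds insert_commute)
  show ?thesis unfolding U3 GL using seven[OF h0 ha hb hc hab hac hbc] by (simp add: algebra_simps)
qed


definition Gam :: "('n::finite \<Rightarrow> real) \<Rightarrow> ('n \<Rightarrow> nat set) \<Rightarrow> nat set \<Rightarrow> real" where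
  "Gam t p L = (\<Sum>j\<in>UNIV. t j * of_bool (L \<subseteq> p j))"

lemma F_expand:
  assumes "finite K"
  shows "(\<Sum>j\<in>UNIV. t j * of_bool (odd (card (K \<inter> p j))))
       = (\<Sum>L\<in>Pow K. if L = {} then 0 else (-2) ^ (card L - 1) * Gam t p L)"
proof -
  have "(\<Sum>j\<in>UNIV. t j * of_bool (odd (card (K \<inter> p j))))
      = (\<Sum>j\<in>UNIV. \<Sum>L\<in>Pow K. t j * (if L = {} then 0 else (-2) ^ (card L - 1) * of_bool (L \<subseteq> p j)))"
    by (simp add: par_expand[OF assms] sum_distrib_left)
  also have "\<dots> = (\<Sum>L\<in>Pow K. \<Sum>j\<in>UNIV. t j * (if L = {} then 0 else (-2) ^ (card L - 1) * of_bool (L \<subseteq> p j)))"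
    by (rule sum.swap)
  also have "\<dots> = (\<Sum>L\<in>Pow K. if L = {} then 0 else (-2) ^ (card L - 1) * Gam t p L)"
  proof (rule sum.cong[OF refl])
    fix L
    show "(\<Sum>j\<in>UNIV. t j * (if L = {} then 0 else (-2) ^ (card L - 1) * of_bool (L \<subseteq> p j)))
       = (if L = {} then 0 else (-2) ^ (card L - 1) * Gam t p L)"
    proof (cases "L = {}")
      case False
      then have "(\<Sum>j\<in>UNIV. t j * (if L = {} then 0 else (-2) ^ (card L - 1) * of_bool (L \<subseteq> p j)))
          = (\<Sum>j\<in>UNIV. (-2) ^ (card L - 1) * (t j * of_bool (L \<subseteq> p j)))"
        by (intro sum.cong refl) (simp add: mult_ac)
      then show ?thesis using False unfolding Gam_def sum_distrib_left by simp
    qed simp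
  qed
  finally show ?thesis .
qed

lemma split_card:
  fixes g :: "nat set \<Rightarrow> real"
  assumes "finite K"
  shows "(\<Sum>L\<in>Pow K. if L = {} then 0 else (-2) ^ (card L - 1) * g L)
     = (\<Sum>k\<in>K. g {k}) - 2 * (\<Sum>L\<in>{L\<in>Pow K. card L = 2}. g L)
       + (\<Sum>L\<in>{L\<in>Pow K. 3 \<le> card L}. (-2) ^ (card L - 1) * g L)"
proof -
  have fP: "finite (Pow K)" using assms by simp
  have "(\<Sum>L\<in>Pow K. if L = {} then 0 else (-2) ^ (card L - 1) * g L)
     = (\<Sum>L\<in>Pow K. (if card L = 1 then g L else 0) - 2 * (if card L = 2 then g L else 0)
           + (if 3 \<le> card L then (-2) ^ (card L - 1) * g L else 0))"
  proof (rule sum.cong[OF refl])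
    fix L assume "L \<in> Pow K"
    then have "finite L" using assms finite_subset by auto
    then show "(if L = {} then 0 else (-2) ^ (card L - 1) * g L)
      = (if card L = 1 then g L else 0) - 2 * (if card L = 2 then g L else 0)
           + (if 3 \<le> card L then (-2) ^ (card L - 1) * g L else 0)"
    proof -
      have "L \<noteq> {} \<Longrightarrow> 1 \<le> card L" using \<open>finite L\<close> by (simp add: Suc_le_eq card_gt_0_iff)
      then show ?thesis by (cases "L = {}"; cases "card L = 1"; cases "card L = 2") auto
    qed
  qed
  also have "\<dots> = (\<Sum>L\<in>Pow K. if card L = 1 then g L else 0) - 2 * (\<Sum>L\<in>Pow K. if card L = 2 then g L else 0)
           + (\<Sum>L\<in>Pow K. if 3 \<le> card L then (-2) ^ (card L - 1) * g L else 0)"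
    by (simp add: sum.distrib sum_subtractf sum_distrib_left)
  also have "(\<Sum>L\<in>Pow K. if card L = 1 then g L else 0) = (\<Sum>L\<in>{L\<in>Pow K. card L = 1}. g L)"
    by (rule sum.inter_filter[symmetric, OF fP])
  also have "{L\<in>Pow K. card L = 1} = (\<lambda>k. {k}) ` K"
    by (auto simp: card_1_singleton_iff)
  also have "(\<Sum>L\<in>(\<lambda>k. {k}) ` K. g L) = (\<Sum>k\<in>K. g {k})"
    by (rule sum.reindex[unfolded comp_def]) (auto simp: inj_on_def)
  also have "(\<Sum>L\<in>Pow K. if card L = 2 then g L else 0) = (\<Sum>L\<in>{L\<in>Pow K. card L = 2}. g L)"
    by (rule sum.inter_filter[symmetric, OF fP])
  also have "(\<Sum>L\<in>Pow K. if 3 \<le> card L then (-2) ^ (card L - 1) * g L else 0)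
     = (\<Sum>L\<in>{L\<in>Pow K. 3 \<le> card L}. (-2) ^ (card L - 1) * g L)"
    by (rule sum.inter_filter[symmetric, OF fP])
  finally show ?thesis .
qed

lemma regroup:
  fixes f :: "'n::finite \<Rightarrow> real"
  assumes "\<And>j. p j \<subseteq> U" "finite U"
  shows "(\<Sum>j\<in>UNIV. f j * of_bool (L \<subseteq> p j)) = (\<Sum>R\<in>Pow U. of_bool (L \<subseteq> R) * (\<Sum>j\<in>UNIV. f j * of_bool (p j = R)))"
proof -
  have "(\<Sum>R\<in>Pow U. of_bool (L \<subseteq> R) * (\<Sum>j\<in>UNIV. f j * of_bool (p j = R)))
      = (\<Sum>R\<in>Pow U. \<Sum>j\<in>UNIV. f j * (if R = p j then of_bool (L \<subseteq> R) else 0))"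
  proof (rule sum.cong[OF refl])
    fix R
    have "of_bool (L \<subseteq> R) * (\<Sum>j\<in>UNIV. f j * of_bool (p j = R)) = (\<Sum>j\<in>UNIV. of_bool (L \<subseteq> R) * (f j * of_bool (p j = R)))"
      by (rule sum_distrib_left)
    also have "\<dots> = (\<Sum>j\<in>UNIV. f j * (if R = p j then of_bool (L \<subseteq> R) else 0))"
      by (rule sum.cong[OF refl]) auto
    finally show "of_bool (L \<subseteq> R) * (\<Sum>j\<in>UNIV. f j * of_bool (p j = R)) = (\<Sum>j\<in>UNIV. f j * (if R = p j then of_bool (L \<subseteq> R) else 0))" .
  qed
  also have "\<dots> = (\<Sum>j\<in>UNIV. \<Sum>R\<in>Pow U. f j * (if R = p j then of_bool (L \<subseteq> R) else 0))"
    by (rule sum.swap)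
  also have "\<dots> = (\<Sum>j\<in>UNIV. f j * of_bool (L \<subseteq> p j))"
  proof (rule sum.cong[OF refl])
    fix j
    have "(\<Sum>R\<in>Pow U. f j * (if R = p j then of_bool (L \<subseteq> R) else 0))
       = (\<Sum>R\<in>Pow U. if R = p j then f j * of_bool (L \<subseteq> R) else 0)"
      by (rule sum.cong) auto
    also have "\<dots> = f j * of_bool (L \<subseteq> p j)" using assms by (simp add: sum.delta')
    finally show "(\<Sum>R\<in>Pow U. f j * (if R = p j then of_bool (L \<subseteq> R) else 0)) = f j * of_bool (L \<subseteq> p j)" .
  qed
  finally show ?thesis by simp
qed

lemma sum_supsets_single:
  fixes X :: "nat set \<Rightarrow> 'b::comm_ring_1"
  assumes "finite U" "L \<subseteq> U" "\<And>R. R \<subseteq> U \<Longrightarrow> L \<subseteq> R \<Longrightarrow> R \<noteq> L \<Longrightarrow> X R = 0"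
  shows "(\<Sum>R\<in>Pow U. of_bool (L \<subseteq> R) * X R) = X L"
proof -
  have "(\<Sum>R\<in>Pow U. of_bool (L \<subseteq> R) * X R) = (\<Sum>R\<in>Pow U. if R = L then X L else 0)"
    by (rule sum.cong[OF refl]) (use assms in auto)
  also have "\<dots> = X L" using assms by (simp add: sum.delta')
  finally show ?thesis .
qed


lemma inZ1_floor: "inZ 1 x \<Longrightarrow> real_of_int \<lfloor>x\<rfloor> = x"
  unfolding inZ_def by auto

lemma inZ4_int_dvd: "inZ 4 (real_of_int X) \<Longrightarrow> 4 dvd X"
  unfolding inZ_def by (metis dvd_triv_left of_int_eq_iff of_int_mult of_int_numeral)

lemma inZ_diff3: "inZ r X \<Longrightarrow> inZ r Y \<Longrightarrow> inZ r Z \<Longrightarrow> inZ r (X - Y - Z)"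
  using inZ_diff by blast

theorem core:
  fixes t :: "'n::finite \<Rightarrow> real" and p :: "'n \<Rightarrow> nat set" and q :: "nat set \<Rightarrow> int"
  assumes p5: "\<And>j. p j \<subseteq> {..<5}"
    and piv: "\<And>k. k < 5 \<Longrightarrow> (\<exists>j. p j = {k}) \<or> (\<forall>j. k \<notin> p j)"
    and hyp: "\<And>K. K \<subseteq> {..<5} \<Longrightarrow> inZ 4 ((\<Sum>j\<in>UNIV. t j * of_bool (odd (card (K \<inter> p j)))) - 2 * of_int (q K))"
    and quad: "\<And>K. K \<subseteq> {..<5} \<Longrightarrow> even (q K - (\<Sum>k\<in>K. q {k}) - (\<Sum>L\<in>{L\<in>Pow K. card L = 2}. q L - (\<Sum>k\<in>L. q {k})))"
  shows "\<exists>n::'n \<Rightarrow> int. \<forall>K\<subseteq>{..<5}. 4 dvd ((\<Sum>j\<in>UNIV. n j * of_bool (odd (card (K \<inter> p j)))) - 2 * q K)"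
proof -
  define U :: "nat set" where "U = {..<5}"
  define G where "G = Gam t p"
  have finU: "finite U" unfolding U_def by simp
  have fin: "finite K" if "K \<subseteq> U" for K using that finU finite_subset by blast
  define H where "H K = (\<Sum>L\<in>{L\<in>Pow K. 3 \<le> card L}. (-2) ^ (card L - 1) * G L)" for K
  have FG: "(\<Sum>j\<in>UNIV. t j * of_bool (odd (card (K \<inter> p j))))
       = (\<Sum>k\<in>K. G {k}) - 2 * (\<Sum>L\<in>{L\<in>Pow K. card L = 2}. G L) + H K" if "K \<subseteq> U" for K
    unfolding H_def G_def using F_expand[OF fin[OF that]] split_card[OF fin[OF that]] by simp
  have G1: "inZ 4 (G {k} - 2 * of_int (q {k}))" if "k < 5" for k
  proof -
    have e2: "{L\<in>Pow {k}. card L = 2} = {}" by (auto simp: subset_singleton_iff)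
    have e3: "{L\<in>Pow {k}. 3 \<le> card L} = {}" by (auto simp: subset_singleton_iff)
    have s2: "(\<Sum>L\<in>{L\<in>Pow {k}. card L = 2}. G L) = 0" unfolding e2 by simp
    have h0: "H {k} = 0" unfolding H_def e3 by simp
    have kU: "{k} \<subseteq> U" using that unfolding U_def by simp
    have "(\<Sum>j\<in>UNIV. t j * of_bool (odd (card ({k} \<inter> p j)))) = G {k}"
      using FG[OF kU] s2 h0 by simp
    moreover have "inZ 4 ((\<Sum>j\<in>UNIV. t j * of_bool (odd (card ({k} \<inter> p j)))) - 2 * of_int (q {k}))"
      using hyp kU unfolding U_def by blast
    ultimately show ?thesis by simp
  qed
  have G2: "inZ 2 (G {k,l} - (of_int (q {k}) + of_int (q {l}) - of_int (q {k,l})))" if "k < 5" "l < 5" "k \<noteq> l" for k l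
  proof -
    have pw: "{L \<in> Pow {k,l}. card L = 2} = {{k,l}}" using that by (auto simp: card_2_iff)
    have pw3: "{L \<in> Pow {k,l}. 3 \<le> card L} = {}"
    proof -
      have "card L \<le> 2" if "L \<subseteq> {k,l}" for L
        using card_mono[OF _ that] \<open>k \<noteq> l\<close> by simp
      then have "\<not> (L \<subseteq> {k,l} \<and> 3 \<le> card L)" for L by (metis numeral_le_iff semiring_norm(72) order_trans not_less_eq_eq numeral_3_eq_3 numeral_2_eq_2)
      then show ?thesis by blast
    qed
    have "inZ 4 (G {k} + G {l} - 2 * G {k,l} - 2 * of_int (q {k,l}))"
      using hyp[of "{k,l}"] FG[of "{k,l}"] that unfolding U_def H_def pw pw3 by simp
    then have "inZ 4 ((G {k} + G {l} - 2 * G {k,l} - 2 * of_int (q {k,l})) - (G {k} - 2 * of_int (q {k})) - (G {l} - 2 * of_int (q {l})))"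
      using G1[OF that(1)] G1[OF that(2)] by (rule inZ_diff3)
    then have "inZ (2 * 2) (2 * - (G {k,l} - (of_int (q {k}) + of_int (q {l}) - of_int (q {k,l}))))"
      by (simp add: algebra_simps)
    then have "inZ 2 (- (G {k,l} - (of_int (q {k}) + of_int (q {l}) - of_int (q {k,l}))))"
      by (rule inZ_unscale) simp
    then show ?thesis using inZ_neg by fastforce
  qed
  have G2': "inZ 2 (G L - ((\<Sum>k\<in>L. of_int (q {k})) - of_int (q L)))" if "L \<subseteq> U" "card L = 2" for L
  proof -
    from that(2) obtain k l where L: "L = {k,l}" "k \<noteq> l" by (auto simp: card_2_iff)
    then have "k < 5" "l < 5" using that(1) unfolding U_def by auto
    then show ?thesis using G2[of k l] L by simp
  qed
  have Gint1: "inZ 1 (G {k})" if "k < 5" for k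
  proof -
    have "inZ (2 * 2) (G {k} - 2 * of_int (q {k}))" using G1[OF that] by simp
    then have "inZ 2 (G {k} - 2 * of_int (q {k}))" by (rule inZ_coarse[where d=2, simplified])
    then have "inZ 1 (G {k} - 2 * of_int (q {k}))" using inZ_coarse[where r=1 and d=2] by simp
    then have "inZ 1 (G {k} - 2 * of_int (q {k}) + of_int (2 * q {k}))" by (rule inZ_add) (rule inZ_int)
    then show ?thesis by simp
  qed
  have Gint2: "inZ 1 (G L)" if "L \<subseteq> U" "card L = 2" for L
  proof -
    have "inZ 1 (G L - ((\<Sum>k\<in>L. of_int (q {k})) - of_int (q L)))"
      using G2'[OF that] inZ_coarse[where r=1 and d=2] by simp
    then have "inZ 1 (G L - ((\<Sum>k\<in>L. of_int (q {k})) - of_int (q L)) + of_int ((\<Sum>k\<in>L. q {k}) - q L))"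
      by (rule inZ_add) (rule inZ_int)
    then show ?thesis by simp
  qed
  have R4: "inZ 4 ((\<Sum>k\<in>K. G {k}) - 2 * (\<Sum>L\<in>{L\<in>Pow K. card L = 2}. G L) - 2 * of_int (q K))" if "K \<subseteq> U" for K
  proof -
    define P2 where "P2 = {L\<in>Pow K. card L = 2}"
    define e where "e = q K - (\<Sum>k\<in>K. q {k}) - (\<Sum>L\<in>P2. q L - (\<Sum>k\<in>L. q {k}))"
    have ev: "even e" unfolding e_def P2_def using quad that unfolding U_def by blast
    then obtain z where z: "e = 2 * z" by blast
    have a: "inZ 4 (\<Sum>k\<in>K. G {k} - 2 * of_int (q {k}))"
      by (rule inZ_sum) (use G1 that in \<open>auto simp: U_def\<close>)
    have b: "inZ 4 (2 * (\<Sum>L\<in>P2. G L - ((\<Sum>k\<in>L. of_int (q {k})) - of_int (q L))))"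
    proof -
      have "inZ 2 (\<Sum>L\<in>P2. G L - ((\<Sum>k\<in>L. of_int (q {k})) - of_int (q L)))"
        by (rule inZ_sum) (use G2' that in \<open>auto simp: P2_def\<close>)
      then show ?thesis using inZ_scale[of 2 _ 2] by simp
    qed
    have c: "inZ 4 (of_int (-4 * z))" unfolding inZ_def by (rule exI[of _ "-z"]) simp
    have "(\<Sum>k\<in>K. G {k}) - 2 * (\<Sum>L\<in>P2. G L) - 2 * of_int (q K)
       = (\<Sum>k\<in>K. G {k} - 2 * of_int (q {k})) - 2 * (\<Sum>L\<in>P2. G L - ((\<Sum>k\<in>L. of_int (q {k})) - of_int (q L)))
         - 2 * of_int e"
      unfolding e_def by (simp add: sum_subtractf sum_distrib_left sum.distrib algebra_simps of_int_sum)
    also have "\<dots> = (\<Sum>k\<in>K. G {k} - 2 * of_int (q {k})) - 2 * (\<Sum>L\<in>P2. G L - ((\<Sum>k\<in>L. of_int (q {k})) - of_int (q L)))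
         + of_int (-4 * z)" using z by simp
    finally show ?thesis unfolding P2_def[symmetric] using inZ_add[OF inZ_diff[OF a b] c] by simp
  qed
  have H4: "inZ 4 (H K)" if "K \<subseteq> U" for K
  proof -
    have "H K = ((\<Sum>j\<in>UNIV. t j * of_bool (odd (card (K \<inter> p j)))) - 2 * of_int (q K))
       - ((\<Sum>k\<in>K. G {k}) - 2 * (\<Sum>L\<in>{L\<in>Pow K. card L = 2}. G L) - 2 * of_int (q K))"
      using FG[OF that] by simp
    then show ?thesis using inZ_diff[OF hyp[of K] R4[OF that]] that unfolding U_def by simp
  qed
  have P3: "inZ 4 ((-2) ^ (card L - 1) * G L)" if "L \<subseteq> U" "3 \<le> card L" for L
    using that
  proof (induction "card L" arbitrary: L rule: less_induct)
    case less
    have finL: "finite L" using fin[OF less.prems(1)] .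
    have eq: "{L'\<in>Pow L. 3 \<le> card L'} = insert L {L'\<in>Pow L. 3 \<le> card L' \<and> L' \<noteq> L}"
      using less.prems by auto
    have "H L = (-2) ^ (card L - 1) * G L + (\<Sum>L'\<in>{L'\<in>Pow L. 3 \<le> card L' \<and> L' \<noteq> L}. (-2) ^ (card L' - 1) * G L')"
      unfolding H_def eq by (rule sum.insert) (use finL in auto)
    moreover have "inZ 4 (\<Sum>L'\<in>{L'\<in>Pow L. 3 \<le> card L' \<and> L' \<noteq> L}. (-2) ^ (card L' - 1) * G L')"
    proof (rule inZ_sum)
      fix L' assume L': "L' \<in> {L'\<in>Pow L. 3 \<le> card L' \<and> L' \<noteq> L}"
      then have "card L' < card L" using finL by (auto intro: psubset_card_mono)
      then show "inZ 4 ((-2) ^ (card L' - 1) * G L')" using less.hyps L' less.prems(1) by auto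
    qed
    ultimately show ?case using inZ_diff[OF H4[OF less.prems(1)]] by fastforce
  qed
  define T where "T R = (\<Sum>j\<in>UNIV. t j * of_bool (p j = R))" for R
  define pres where "pres R \<longleftrightarrow> (\<exists>j. p j = R)" for R
  define rep where "rep R = (SOME j. p j = R)" for R
  have T0: "T R = 0" if "\<not> pres R" for R using that unfolding T_def pres_def by simp
  have GT: "G L = (\<Sum>R\<in>Pow U. of_bool (L \<subseteq> R) * T R)" for L
    unfolding G_def Gam_def T_def by (rule regroup) (use p5 in \<open>auto simp: U_def\<close>)
  define A3 where "A3 R = (if 3 \<le> card R then \<lceil>T R\<rceil> else 0)" for R
  define U3 where "U3 L = (\<Sum>R\<in>Pow U. of_bool (L \<subseteq> R) * A3 R)" for L
  define A2 where "A2 R = (if card R = 2 \<and> pres R then \<lfloor>G R\<rfloor> - U3 R else 0)" for R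
  define V2 where "V2 L = (\<Sum>R\<in>Pow U. of_bool (L \<subseteq> R) * (A3 R + A2 R))" for L
  define A1 where "A1 R = (if card R = 1 \<and> pres R then \<lfloor>G R\<rfloor> - V2 R else 0)" for R
  define A where "A R = A1 R + A2 R + A3 R" for R
  define n where "n j = (if j = rep (p j) then A (p j) else 0)" for j
  define NI where "NI L = (\<Sum>R\<in>Pow U. of_bool (L \<subseteq> R) * A R)" for L
  have A0: "A R = 0" if "\<not> pres R" for R using T0[OF that] that unfolding A_def A1_def A2_def A3_def by simp
  have nR: "(\<Sum>j\<in>UNIV. real_of_int (n j) * of_bool (p j = R)) = real_of_int (A R)" for R
  proof (cases "pres R")
    case True
    then have "\<exists>j. p j = R" unfolding pres_def .
    then have pr: "p (rep R) = R" unfolding rep_def by (rule someI_ex)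
    have "(\<Sum>j\<in>UNIV. real_of_int (n j) * of_bool (p j = R)) = (\<Sum>j\<in>UNIV. if j = rep R then real_of_int (A R) else 0)"
      by (rule sum.cong[OF refl]) (auto simp: n_def pr)
    also have "\<dots> = real_of_int (A R)" by simp
    finally show ?thesis .
  next
    case False
    then have "p j \<noteq> R" for j unfolding pres_def by auto
    then show ?thesis using A0[OF False] by simp
  qed
  have NIr: "Gam (\<lambda>j. real_of_int (n j)) p L = real_of_int (NI L)" for L
  proof -
    have "Gam (\<lambda>j. real_of_int (n j)) p L = (\<Sum>R\<in>Pow U. of_bool (L \<subseteq> R) * (\<Sum>j\<in>UNIV. real_of_int (n j) * of_bool (p j = R)))"
      unfolding Gam_def by (rule regroup) (use p5 in \<open>auto simp: U_def\<close>)
    also have "\<dots> = real_of_int (NI L)" unfolding NI_def nR by simp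
    finally show ?thesis .
  qed
  have NIsplit: "NI L = (\<Sum>R\<in>Pow U. of_bool (L \<subseteq> R) * A1 R) + (\<Sum>R\<in>Pow U. of_bool (L \<subseteq> R) * A2 R) + U3 L" for L
    unfolding NI_def U3_def A_def by (simp add: sum.distrib algebra_simps)
  have cardsup: "card L < card R" if "L \<subseteq> R" "R \<noteq> L" "R \<subseteq> U" for L R
    using that fin[OF that(3)] by (auto intro: psubset_card_mono)
  have N1: "real_of_int (NI {k}) = G {k}" if k5: "k < 5" for k
  proof (cases "pres {k}")
    case True
    have s1: "(\<Sum>R\<in>Pow U. of_bool ({k} \<subseteq> R) * A1 R) = A1 {k}"
    proof (rule sum_supsets_single[OF finU])
      show "{k} \<subseteq> U" using k5 unfolding U_def by simp
      fix R assume "R \<subseteq> U" "{k} \<subseteq> R" "R \<noteq> {k}"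
      then have "card R \<noteq> 1" using cardsup[of "{k}" R] by simp
      then show "A1 R = 0" unfolding A1_def by simp
    qed
    have "NI {k} = A1 {k} + V2 {k}"
      unfolding NI_def V2_def A_def s1[symmetric] by (simp add: sum.distrib algebra_simps)
    also have "\<dots> = \<lfloor>G {k}\<rfloor>" unfolding A1_def using True by simp
    finally show ?thesis using inZ1_floor[OF Gint1[OF k5]] by simp
  next
    case False
    then have nk: "k \<notin> p j" for j using piv[OF k5] unfolding pres_def by auto
    have "real_of_int (NI {k}) = Gam (\<lambda>j. real_of_int (n j)) p {k}" using NIr by simp
    also have "\<dots> = 0" unfolding Gam_def using nk by simp
    also have "0 = G {k}" unfolding G_def Gam_def using nk by simp
    finally show ?thesis .
  qed
  have N2: "inZ 2 (real_of_int (NI L) - G L)" if LU: "L \<subseteq> U" and c2: "card L = 2" for L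
  proof -
    have s1: "(\<Sum>R\<in>Pow U. of_bool (L \<subseteq> R) * A1 R) = 0"
    proof (rule sum.neutral, rule ballI)
      fix R assume "R \<in> Pow U"
      then have "L \<subseteq> R \<Longrightarrow> 2 \<le> card R" using card_mono[of R L] fin[of R] c2 by auto
      then show "of_bool (L \<subseteq> R) * A1 R = 0" unfolding A1_def by auto
    qed
    have s2: "(\<Sum>R\<in>Pow U. of_bool (L \<subseteq> R) * A2 R) = A2 L"
    proof (rule sum_supsets_single[OF finU LU])
      fix R assume "R \<subseteq> U" "L \<subseteq> R" "R \<noteq> L"
      then have "card R \<noteq> 2" using cardsup[of L R] c2 by simp
      then show "A2 R = 0" unfolding A2_def by simp
    qed
    have NI2: "NI L = A2 L + U3 L" using NIsplit[of L] s1 s2 by simp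
    show ?thesis
    proof (cases "pres L")
      case True
      then have e: "NI L = \<lfloor>G L\<rfloor>" using NI2 c2 unfolding A2_def by simp
      have "real_of_int \<lfloor>G L\<rfloor> = G L" by (rule inZ1_floor[OF Gint2[OF LU c2]])
      then have "real_of_int (NI L) - G L = 0" using e by simp
      then show ?thesis by simp
    next
      case False
      then have NI3: "NI L = U3 L" using NI2 unfolding A2_def by simp
      from c2 obtain k l where kl: "L = {k,l}" "k \<noteq> l" by (auto simp: card_2_iff)
      then have k5: "k < 5" "l < 5" using LU unfolding U_def by auto
      have pc: "inZ 2 ((\<Sum>R\<in>Pow {..<5}. of_bool ({k,l} \<subseteq> R) * real_of_int (if 3 \<le> card R then \<lceil>T R\<rceil> else 0)) - G {k,l})"
      proof (rule pair_core[of G T])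
        show "G L' = (\<Sum>R\<in>Pow {..<5}. of_bool (L' \<subseteq> R) * T R)" for L' using GT unfolding U_def by simp
        show "inZ 4 ((-2) ^ (card L' - 1) * G L')" if "L' \<subseteq> {..<5}" "3 \<le> card L'" for L'
          using P3 that unfolding U_def by simp
        show "inZ 1 (G {k,l})" using Gint2[OF LU c2] kl by simp
        show "k < 5" "l < 5" "k \<noteq> l" by fact+
        show "T {k,l} = 0" using T0 False kl by simp
      qed
      have "real_of_int (NI L) = (\<Sum>R\<in>Pow {..<5}. of_bool ({k,l} \<subseteq> R) * real_of_int (if 3 \<le> card R then \<lceil>T R\<rceil> else 0))"
      proof -
        have "real_of_int (NI L) = real_of_int (U3 L)" using NI3 by simp
        also have "\<dots> = (\<Sum>R\<in>Pow U. of_bool (L \<subseteq> R) * real_of_int (A3 R))"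
          unfolding U3_def of_int_sum by (rule sum.cong[OF refl]) simp
        finally show ?thesis unfolding A3_def kl U_def .
      qed
      then show ?thesis using pc kl by simp
    qed
  qed
  have N3: "inZ 4 ((-2) ^ (card L - 1) * (real_of_int (NI L) - G L))" if LU: "L \<subseteq> U" and c3: "3 \<le> card L" for L
  proof -
    have "(-2::real) ^ (card L - 1) = 4 * (-2) ^ (card L - 3)"
    proof -
      have "card L - 1 = Suc (Suc (card L - 3))" using c3 by simp
      then show ?thesis by simp
    qed
    then have a: "inZ 4 ((-2) ^ (card L - 1) * real_of_int (NI L))"
      unfolding inZ_def by (intro exI[of _ "(-2) ^ (card L - 3) * NI L"]) simp
    show ?thesis using inZ_diff[OF a P3[OF LU c3]] by (simp add: algebra_simps)
  qed
  show ?thesis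
  proof (intro exI allI impI)
    fix K :: "nat set" assume K: "K \<subseteq> {..<5}"
    then have KU: "K \<subseteq> U" unfolding U_def .
    have e2: "(\<Sum>j\<in>UNIV. real_of_int (n j) * of_bool (odd (card (K \<inter> p j))))
       = (\<Sum>L\<in>Pow K. if L = {} then 0 else (-2) ^ (card L - 1) * real_of_int (NI L))"
    proof -
      have "(\<Sum>j\<in>UNIV. real_of_int (n j) * of_bool (odd (card (K \<inter> p j))))
        = (\<Sum>L\<in>Pow K. if L = {} then 0 else (-2) ^ (card L - 1) * Gam (\<lambda>j. real_of_int (n j)) p L)"
        by (rule F_expand[OF fin[OF KU]])
      also have "\<dots> = (\<Sum>L\<in>Pow K. if L = {} then 0 else (-2) ^ (card L - 1) * real_of_int (NI L))"
        by (simp only: NIr)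
      finally show ?thesis .
    qed
    have e3: "(\<Sum>j\<in>UNIV. t j * of_bool (odd (card (K \<inter> p j))))
       = (\<Sum>L\<in>Pow K. if L = {} then 0 else (-2) ^ (card L - 1) * G L)"
      using F_expand[OF fin[OF KU], of t p] unfolding G_def by simp
    have eqX: "real_of_int ((\<Sum>j\<in>UNIV. n j * of_bool (odd (card (K \<inter> p j)))) - 2 * q K)
      = ((\<Sum>j\<in>UNIV. t j * of_bool (odd (card (K \<inter> p j)))) - 2 * of_int (q K))
        + (\<Sum>L\<in>Pow K. if L = {} then 0 else (-2) ^ (card L - 1) * (real_of_int (NI L) - G L))"
    proof -
      have a1: "real_of_int ((\<Sum>j\<in>UNIV. n j * of_bool (odd (card (K \<inter> p j)))) - 2 * q K)
        = (\<Sum>j\<in>UNIV. real_of_int (n j) * of_bool (odd (card (K \<inter> p j)))) - 2 * of_int (q K)"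
        by (simp add: of_int_sum)
      have a2: "(\<Sum>L\<in>Pow K. if L = {} then 0 else (-2) ^ (card L - 1) * real_of_int (NI L))
        = (\<Sum>L\<in>Pow K. if L = {} then 0 else (-2) ^ (card L - 1) * G L)
        + (\<Sum>L\<in>Pow K. if L = {} then 0 else (-2) ^ (card L - 1) * (real_of_int (NI L) - G L))"
        unfolding sum.distrib[symmetric] by (rule sum.cong[OF refl]) (simp add: algebra_simps)
      show ?thesis unfolding a1 e2 e3 a2 by simp
    qed
    have iB: "inZ 4 (\<Sum>L\<in>Pow K. if L = {} then 0 else (-2) ^ (card L - 1) * (real_of_int (NI L) - G L))"
    proof (rule inZ_sum)
      fix L assume L: "L \<in> Pow K"
      then have LU: "L \<subseteq> U" using KU by auto
      show "inZ 4 (if L = {} then 0 else (-2) ^ (card L - 1) * (real_of_int (NI L) - G L))"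
      proof (cases "L = {}")
        case False
        then have "card L \<noteq> 0" using fin[OF LU] by simp
        then consider "card L = 1" | "card L = 2" | "3 \<le> card L" by linarith
        then show ?thesis
        proof cases
          case 1
          then obtain k where "L = {k}" by (auto simp: card_1_singleton_iff)
          then show ?thesis using N1[of k] LU unfolding U_def by simp
        next
          case 2
          have "inZ (2 * 2) (2 * (real_of_int (NI L) - G L))" by (rule inZ_scale[OF N2[OF LU 2]])
          then have "inZ 4 (- (2 * (real_of_int (NI L) - G L)))" by (intro inZ_neg) simp
          then show ?thesis using 2 False by simp
        next
          case 3
          then show ?thesis using N3[OF LU 3] False by simp
        qed
      qed simp
    qed
    have "inZ 4 (real_of_int ((\<Sum>j\<in>UNIV. n j * of_bool (odd (card (K \<inter> p j)))) - 2 * q K))"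
      unfolding eqX by (rule inZ_add[OF hyp[OF K] iB])
    then show "4 dvd ((\<Sum>j\<in>UNIV. n j * of_bool (odd (card (K \<inter> p j)))) - 2 * q K)"
      by (rule inZ4_int_dvd)
  qed
qed


definition SS :: "(nat \<Rightarrow> bit ^ 'n) \<Rightarrow> nat \<Rightarrow> (bit ^ 'n) set" where
  "SS b m = range (\<lambda>u. \<Sum>k<m. u k *s b k)"

lemma SS_I: "x = (\<Sum>k<m. u k *s b k) \<Longrightarrow> x \<in> SS b m"
  unfolding SS_def by (intro image_eqI[where x=u]) auto

lemma vec_self_add[simp]: "(x::bit^'n) + x = 0"
  by (simp add: vec_eq_iff)

lemma SS_subspace: "vec.subspace (SS b m)"
proof (rule vec.subspaceI)
  show "0 \<in> SS b m" unfolding SS_def by (rule range_eqI[of _ _ "\<lambda>_. 0"]) simp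
next
  fix x y assume "x \<in> SS b m" "y \<in> SS b m"
  then obtain u w where "x = (\<Sum>k<m. u k *s b k)" "y = (\<Sum>k<m. w k *s b k)"
    unfolding SS_def by auto
  then have "x + y = (\<Sum>k<m. (u k + w k) *s b k)"
    by (simp only: sum.distrib vec.scale_left_distrib)
  then show "x + y \<in> SS b m" by (rule SS_I)
next
  fix c x assume "x \<in> SS b m"
  then obtain u where "x = (\<Sum>k<m. u k *s b k)" unfolding SS_def by auto
  then have "c *s x = (\<Sum>k<m. (c * u k) *s b k)"
    by (simp add: vec.scale_sum_right)
  then show "c *s x \<in> SS b m" by (rule SS_I)
qed

lemma SS_gen: "k < m \<Longrightarrow> b k \<in> SS b m"
proof -
  assume "k < m"
  have "(\<Sum>l<m. (if l = k then 1 else 0) *s b l) = (\<Sum>l<m. if l = k then b l else 0)"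
    by (rule sum.cong) auto
  also have "\<dots> = b k" using \<open>k < m\<close> by simp
  finally have "(\<Sum>l<m. (if l = k then 1 else 0) *s b l) = b k" .
  then show ?thesis by (rule SS_I[OF sym])
qed

lemma SS_mono: assumes "\<And>k. k < m \<Longrightarrow> a k \<in> SS c m'" shows "SS a m \<subseteq> SS c m'"
proof
  fix x assume "x \<in> SS a m"
  then obtain u where "x = (\<Sum>k<m. u k *s a k)" unfolding SS_def by auto
  have sub: "vec.subspace (SS c m')" by (rule SS_subspace)
  show "x \<in> SS c m'" unfolding \<open>x = _\<close>
    by (rule vec.subspace_sum[OF sub], rule vec.subspace_scale[OF sub]) (simp add: assms)
qed

definition ech :: "nat \<Rightarrow> (nat \<Rightarrow> bit ^ 'n) \<Rightarrow> bool" where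
  "ech m b \<longleftrightarrow> (\<forall>k<m. b k = 0 \<or> (\<exists>j. b k $ j = 1 \<and> (\<forall>l<m. l \<noteq> k \<longrightarrow> b l $ j = 0)))"

lemma echelonize: "\<exists>b. ech m b \<and> SS b m = SS g m"
proof (induction m arbitrary: g)
  case 0
  show ?case by (rule exI[of _ g]) (simp add: ech_def)
next
  case (Suc m)
  from Suc.IH obtain b where ech: "ech m b" and SSb: "SS b m = SS g m" by blast
  define piv where "piv k = (SOME j. b k $ j = 1 \<and> (\<forall>l<m. l \<noteq> k \<longrightarrow> b l $ j = 0))" for k
  have piv: "b k $ piv k = 1 \<and> (\<forall>l<m. l \<noteq> k \<longrightarrow> b l $ piv k = 0)" if "k < m" "b k \<noteq> 0" for k
  proof -
    have "\<exists>j. b k $ j = 1 \<and> (\<forall>l<m. l \<noteq> k \<longrightarrow> b l $ j = 0)"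
      using ech that unfolding ech_def by blast
    then show ?thesis unfolding piv_def by (rule someI_ex)
  qed
  define w where "w k = (if b k \<noteq> 0 then g m $ piv k else 0)" for k
  define s where "s = (\<Sum>k<m. w k *s b k)"
  define v' where "v' = g m + s"
  have s_in: "s \<in> SS b m" unfolding s_def by (rule SS_I) (rule refl)
  have v'piv: "v' $ piv k = 0" if "k < m" "b k \<noteq> 0" for k
  proof -
    have "s $ piv k = (\<Sum>l<m. w l * b l $ piv k)" unfolding s_def by (simp add: sum_component)
    also have "\<dots> = (\<Sum>l<m. if l = k then w k else 0)"
    proof (rule sum.cong[OF refl])
      fix l assume "l \<in> {..<m}"
      then show "w l * b l $ piv k = (if l = k then w k else 0)"
        using piv[OF that] by (cases "b l = 0") (auto simp: w_def)
    qed
    also have "\<dots> = w k" using that by simp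
    finally show ?thesis unfolding v'_def w_def using that by simp
  qed
  have gm: "g m = v' + s" unfolding v'_def by (simp add: add.assoc)
  show ?case
  proof (cases "v' = 0")
    case True
    define b' where "b' = b(m := 0)"
    have "ech (Suc m) b'" unfolding ech_def
    proof (intro allI impI)
      fix k assume k: "k < Suc m"
      show "b' k = 0 \<or> (\<exists>j. b' k $ j = 1 \<and> (\<forall>l<Suc m. l \<noteq> k \<longrightarrow> b' l $ j = 0))"
      proof (cases "k = m")
        case True then show ?thesis by (simp add: b'_def)
      next
        case False
        with k have km: "k < m" by simp
        from ech km have "b k = 0 \<or> (\<exists>j. b k $ j = 1 \<and> (\<forall>l<m. l \<noteq> k \<longrightarrow> b l $ j = 0))"
          unfolding ech_def by blast
        then show ?thesis
        proof
          assume "b k = 0" then show ?thesis using False by (simp add: b'_def)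
        next
          assume "\<exists>j. b k $ j = 1 \<and> (\<forall>l<m. l \<noteq> k \<longrightarrow> b l $ j = 0)"
          then obtain j where j: "b k $ j = 1" "\<forall>l<m. l \<noteq> k \<longrightarrow> b l $ j = 0" by blast
          have "\<forall>l<Suc m. l \<noteq> k \<longrightarrow> b' l $ j = 0"
          proof (intro allI impI)
            fix l assume "l < Suc m" "l \<noteq> k"
            then show "b' l $ j = 0" using j by (cases "l = m") (auto simp: b'_def)
          qed
          then show ?thesis using j False by (auto simp: b'_def)
        qed
      qed
    qed
    moreover have "SS b' (Suc m) = SS g (Suc m)"
    proof
      show "SS b' (Suc m) \<subseteq> SS g (Suc m)"
      proof (rule SS_mono)
        fix k assume "k < Suc m"
        show "b' k \<in> SS g (Suc m)"
        proof (cases "k = m")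
          case True then show ?thesis using SS_subspace[of g "Suc m"]
            by (simp add: b'_def vec.subspace_0)
        next
          case False
          then have "b' k \<in> SS g m" using SS_gen[of k m b] \<open>k < Suc m\<close> SSb by (simp add: b'_def)
          moreover have "SS g m \<subseteq> SS g (Suc m)" by (rule SS_mono) (simp add: SS_gen)
          ultimately show ?thesis by blast
        qed
      qed
      show "SS g (Suc m) \<subseteq> SS b' (Suc m)"
      proof (rule SS_mono)
        have bb': "SS b m \<subseteq> SS b' (Suc m)"
        proof (rule SS_mono)
          fix k assume k: "k < m"
          then have "b k = b' k" by (simp add: b'_def)
          moreover have "b' k \<in> SS b' (Suc m)" using k by (intro SS_gen) simp
          ultimately show "b k \<in> SS b' (Suc m)" by simp
        qed
        fix k assume "k < Suc m"
        show "g k \<in> SS b' (Suc m)"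
        proof (cases "k = m")
          case True then show ?thesis using gm \<open>v' = 0\<close> s_in bb' by auto
        next
          case False then show ?thesis using \<open>k < Suc m\<close> SS_gen[of k m g] SSb bb' by auto
        qed
      qed
    qed
    ultimately show ?thesis by blast
  next
    case False
    then obtain j0 where j0: "v' $ j0 = 1" by (metis bit_not_zero_iff vec_eq_iff zero_index)
    define b' where "b' k = (if k = m then v' else if b k $ j0 = 1 then b k + v' else b k)" for k
    have "ech (Suc m) b'"
      unfolding ech_def
    proof (intro allI impI)
      fix k assume k: "k < Suc m"
      show "b' k = 0 \<or> (\<exists>j. b' k $ j = 1 \<and> (\<forall>l<Suc m. l \<noteq> k \<longrightarrow> b' l $ j = 0))"
      proof (cases "k = m")
        case True
        then show ?thesis using j0 by (auto simp: b'_def)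
      next
        case False
        with k have km: "k < m" by simp
        show ?thesis
        proof (cases "b k = 0")
          case True then show ?thesis using False by (simp add: b'_def)
        next
          case bk: False
          have "b' k $ piv k = 1" using piv[OF km bk] v'piv[OF km bk] False by (auto simp: b'_def)
          moreover have "b' l $ piv k = 0" if "l < Suc m" "l \<noteq> k" for l
            using piv[OF km bk] v'piv[OF km bk] that by (auto simp: b'_def less_Suc_eq)
          ultimately show ?thesis by blast
        qed
      qed
    qed
    moreover have "SS b' (Suc m) = SS g (Suc m)"
    proof
      have gg: "SS g m \<subseteq> SS g (Suc m)" by (rule SS_mono) (simp add: SS_gen)
      have v'in: "v' \<in> SS g (Suc m)"
      proof -
        have "g m \<in> SS g (Suc m)" by (rule SS_gen) simp
        moreover have "s \<in> SS g (Suc m)" using s_in SSb gg by auto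
        ultimately show ?thesis unfolding v'_def by (rule vec.subspace_add[OF SS_subspace])
      qed
      show "SS b' (Suc m) \<subseteq> SS g (Suc m)"
      proof (rule SS_mono)
        fix k assume k: "k < Suc m"
        have "b k \<in> SS g (Suc m)" if "k < m" using SS_gen[OF that, of b] SSb gg by auto
        then show "b' k \<in> SS g (Suc m)"
        proof (cases "k = m")
          case True then show ?thesis using v'in by (simp add: b'_def)
        next
          case False
          then have km: "k < m" using k by simp
          then have bk: "b k \<in> SS g (Suc m)" using \<open>k < m \<Longrightarrow> _\<close> by blast
          show ?thesis
          proof (cases "b k $ j0 = 1")
            case True
            then have "b' k = b k + v'" using False by (simp add: b'_def)
            then show ?thesis using vec.subspace_add[OF SS_subspace bk v'in] by simp
          next
            case False
            then show ?thesis using bk \<open>k \<noteq> m\<close> by (simp add: b'_def)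
          qed
        qed
      qed
      have bb': "SS b m \<subseteq> SS b' (Suc m)"
      proof (rule SS_mono)
        fix k assume k: "k < m"
        have 1: "b' k \<in> SS b' (Suc m)" "b' m \<in> SS b' (Suc m)" using k by (auto intro: SS_gen)
        have "b k = b' k \<or> b k = b' k + b' m"
          using k by (auto simp: b'_def add.assoc)
        moreover have "b' k + b' m \<in> SS b' (Suc m)" using 1 by (rule vec.subspace_add[OF SS_subspace])
        ultimately show "b k \<in> SS b' (Suc m)" using 1 by auto
      qed
      show "SS g (Suc m) \<subseteq> SS b' (Suc m)"
      proof (rule SS_mono)
        fix k assume k: "k < Suc m"
        show "g k \<in> SS b' (Suc m)"
        proof (cases "k = m")
          case True
          have "v' \<in> SS b' (Suc m)" using SS_gen[of m "Suc m" b'] by (simp add: b'_def)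
          moreover have "s \<in> SS b' (Suc m)" using s_in bb' by auto
          ultimately have "v' + s \<in> SS b' (Suc m)" by (rule vec.subspace_add[OF SS_subspace])
          then show ?thesis using True gm by simp
        next
          case False then show ?thesis using k SS_gen[of k m g] SSb bb' by auto
        qed
      qed
    qed
    ultimately show ?thesis by blast
  qed
qed


lemma bit_odd_iff: "odd (b::bit) \<longleftrightarrow> b = 1"
  by (cases b) simp_all

lemma S_repr:
  fixes S :: "(bit ^ 'n) set"
  assumes "F2_subspace S" "F2_dim S \<le> 5"
  shows "\<exists>b. ech 5 b \<and> SS b 5 = S"
proof -
  have sub: "vec.subspace S" using assms(1) unfolding F2_subspace_def .
  obtain B where B: "B \<subseteq> S" "vec.independent B" "S \<subseteq> vec.span B" "card B = vec.dim S"
    by (rule vec.basis_exists)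
  have fB: "finite B" by (rule vec.finiteI_independent[OF B(2)])
  have cB: "card B \<le> 5" using B(4) assms(2) unfolding F2_dim_def by simp
  obtain h where h: "bij_betw h {0..<card B} B" using ex_bij_betw_nat_finite[OF fB] by blast
  define g where "g k = (if k < card B then h k else 0)" for k
  have gS: "g k \<in> S" for k
    using h B(1) vec.subspace_0[OF sub] unfolding g_def bij_betw_def by auto
  have "SS g 5 = S"
  proof
    show "SS g 5 \<subseteq> S"
    proof
      fix x assume "x \<in> SS g 5"
      then obtain u where "x = (\<Sum>k<5. u k *s g k)" unfolding SS_def by auto
      then show "x \<in> S"
        by (auto intro!: vec.subspace_sum[OF sub] vec.subspace_scale[OF sub] gS)
    qed
    have "B \<subseteq> SS g 5"
    proof
      fix v assume "v \<in> B"
      then have "v \<in> h ` {0..<card B}" using h unfolding bij_betw_def by simp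
      then obtain k where k: "k < card B" "v = h k" by auto
      then have "v = g k" unfolding g_def by simp
      then show "v \<in> SS g 5" using SS_gen[of k 5 g] k cB by simp
    qed
    then have "vec.span B \<subseteq> SS g 5" by (rule vec.span_minimal[OF _ SS_subspace])
    then show "S \<subseteq> SS g 5" using B(3) by blast
  qed
  moreover obtain b where "ech 5 b" "SS b 5 = SS g 5" using echelonize by blast
  ultimately show ?thesis by auto
qed

lemma sum_indicator_vec:
  fixes b :: "nat \<Rightarrow> bit ^ 'n"
  assumes "K \<subseteq> {..<m}"
  shows "(\<Sum>k<m. (if k \<in> K then 1 else 0) *s b k) = (\<Sum>k\<in>K. b k)"
proof -
  have "(\<Sum>k<m. (if k \<in> K then 1 else 0) *s b k) = (\<Sum>k<m. if k \<in> K then b k else 0)"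
    by (rule sum.cong) auto
  also have "\<dots> = sum b ({..<m} \<inter> K)" by (simp add: sum.inter_restrict)
  also have "{..<m} \<inter> K = K" using assms by auto
  finally show ?thesis .
qed

lemma SS_elim:
  fixes b :: "nat \<Rightarrow> bit ^ 'n"
  assumes "x \<in> SS b m"
  shows "\<exists>K\<subseteq>{..<m}. x = (\<Sum>k\<in>K. b k)"
proof -
  obtain u where u: "x = (\<Sum>k<m. u k *s b k)" using assms unfolding SS_def by auto
  define K where "K = {k. k < m \<and> u k = 1}"
  have "u k = (if k \<in> K then 1 else 0)" if "k < m" for k
    using that unfolding K_def by (cases "u k") auto
  then have "x = (\<Sum>k<m. (if k \<in> K then 1 else 0) *s b k)" unfolding u by (intro sum.cong) auto
  also have "\<dots> = (\<Sum>k\<in>K. b k)" by (rule sum_indicator_vec) (auto simp: K_def)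
  finally have "x = (\<Sum>k\<in>K. b k)" .
  moreover have "K \<subseteq> {..<m}" unfolding K_def by auto
  ultimately show ?thesis by blast
qed

lemma SS_intro:
  fixes b :: "nat \<Rightarrow> bit ^ 'n"
  assumes "K \<subseteq> {..<m}"
  shows "(\<Sum>k\<in>K. b k) \<in> SS b m"
  using sum_indicator_vec[OF assms, of b] by (metis SS_I)

lemma comp_parity:
  fixes b :: "nat \<Rightarrow> bit ^ 'n"
  assumes "finite K"
  shows "odd ((\<Sum>k\<in>K. b k) $ j) \<longleftrightarrow> odd (card (K \<inter> {k. b k $ j = 1}))"
proof -
  have "(\<Sum>k\<in>K. b k) $ j = (\<Sum>k\<in>K. b k $ j)" by (rule sum_component)
  moreover have "{k\<in>K. odd (b k $ j)} = K \<inter> {k. b k $ j = 1}" by (auto simp: bit_odd_iff)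
  ultimately show ?thesis using even_sum_iff[OF assms, of "\<lambda>k. b k $ j"] by simp
qed

lemma parity_sum_transfer:
  fixes f :: "'a \<Rightarrow> bit" and g :: "'a \<Rightarrow> int"
  assumes "\<And>a. a \<in> A \<Longrightarrow> (even (f a) \<longleftrightarrow> even (g a))"
  shows "even (sum f A) \<longleftrightarrow> even (sum g A)"
  using assms
proof (induction A rule: infinite_finite_induct)
  case (insert x F)
  then show ?case by simp
qed simp_all


lemma bit_add_self: "(x::bit) + x = 0" by simp

lemma quad_bil:
  fixes Q :: "bit ^ 'n \<Rightarrow> bit"
  assumes "is_quadratic Q"
  obtains B :: "bit ^ 'n \<Rightarrow> bit ^ 'n \<Rightarrow> bit" where
    "\<And>x y. Q (x + y) = Q x + Q y + Q 0 + B x y"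
    "\<And>x x' y. B (x + x') y = B x y + B x' y"
    "\<And>y. B 0 y = 0"
proof -
  obtain a0 a bb where Qd: "\<And>x. Q x = a0 + (\<Sum>i\<in>UNIV. a i * x $ i) + (\<Sum>i\<in>UNIV. \<Sum>j\<in>UNIV. bb i j * x $ i * x $ j)"
    using assms unfolding is_quadratic_def by blast
  define Lf where "Lf x = (\<Sum>i\<in>UNIV. a i * x $ i)" for x :: "bit ^ 'n"
  define Bf where "Bf x y = (\<Sum>i\<in>UNIV. \<Sum>j\<in>UNIV. bb i j * x $ i * y $ j)" for x y :: "bit ^ 'n"
  have Q': "Q x = a0 + Lf x + Bf x x" for x unfolding Lf_def Bf_def Qd by simp
  have Ladd: "Lf (x + y) = Lf x + Lf y" for x y by (simp only: Lf_def vector_add_component distrib_left sum.distrib)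
  have L0: "Lf 0 = 0" unfolding Lf_def by simp
  have Badd1: "Bf (x + x') y = Bf x y + Bf x' y" for x x' y
    by (simp only: Bf_def vector_add_component distrib_left distrib_right sum.distrib)
  have Badd2: "Bf y (x + x') = Bf y x + Bf y x'" for x x' y
    by (simp only: Bf_def vector_add_component distrib_left distrib_right sum.distrib)
  have B0: "Bf 0 y = 0" "Bf y 0 = 0" for y unfolding Bf_def by simp_all
  define B where "B x y = Bf x y + Bf y x" for x y
  show ?thesis
  proof (rule that)
    fix x y
    have e1: "Q (x + y) = a0 + (Lf x + Lf y) + (Bf x x + Bf x y + (Bf y x + Bf y y))"
      unfolding Q' Ladd Badd1 Badd2 by (simp only: add_ac)
    have e2: "Q x + Q y + Q 0 + B x y = (a0 + a0 + a0) + (Lf x + Lf y) + (Bf x x + Bf x y + (Bf y x + Bf y y))"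
      unfolding Q' B_def L0 B0 by (simp only: add_ac add_0_right add_0_left)
    have e3: "a0 + a0 + a0 = a0" by (simp only: bit_add_self add_0_left)
    show "Q (x + y) = Q x + Q y + Q 0 + B x y" unfolding e1 e2 e3 ..
  next
    fix x x' y show "B (x + x') y = B x y + B x' y" unfolding B_def Badd1 Badd2 by (simp only: add_ac)
  next
    fix y show "B 0 y = 0" unfolding B_def B0 by simp
  qed
qed

lemma sum_two: "k \<noteq> a \<Longrightarrow> sum g {k, a} = g k + (g a :: 'b::comm_monoid_add)"
  by simp

lemma pairs_insert:
  assumes "a \<notin> K"
  shows "{L\<in>Pow (insert a K). card L = 2} = {L\<in>Pow K. card L = 2} \<union> (\<lambda>k. {k, a}) ` K"
proof
  show "{L\<in>Pow (insert a K). card L = 2} \<subseteq> {L\<in>Pow K. card L = 2} \<union> (\<lambda>k. {k, a}) ` K"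
  proof
    fix L assume L: "L \<in> {L\<in>Pow (insert a K). card L = 2}"
    then obtain x y where xy: "L = {x,y}" "x \<noteq> y" by (auto simp: card_2_iff)
    show "L \<in> {L\<in>Pow K. card L = 2} \<union> (\<lambda>k. {k, a}) ` K"
    proof (cases "a \<in> L")
      case False then show ?thesis using L by auto
    next
      case True
      then have "x = a \<or> y = a" using xy by auto
      then show ?thesis
      proof
        assume "x = a" then have "L = {y, a}" "y \<in> K" using xy L by auto
        then show ?thesis by auto
      next
        assume "y = a" then have "L = {x, a}" "x \<in> K" using xy L by auto
        then show ?thesis by auto
      qed
    qed
  qed
  show "{L\<in>Pow K. card L = 2} \<union> (\<lambda>k. {k, a}) ` K \<subseteq> {L\<in>Pow (insert a K). card L = 2}"
    using assms by (auto simp: card_insert_if)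
qed

lemma Q_sum:
  fixes Q :: "bit ^ 'n \<Rightarrow> bit" and b :: "nat \<Rightarrow> bit ^ 'n" and B
  assumes QB: "\<And>x y. Q (x + y) = Q x + Q y + Q 0 + B x y"
    and Badd: "\<And>x x' y. B (x + x') y = B x y + B x' y" and B0: "\<And>y. B 0 y = 0" and Q0: "Q 0 = 0"
    and fin: "finite K"
  shows "Q (\<Sum>k\<in>K. b k) = (\<Sum>k\<in>K. Q (b k)) + (\<Sum>L\<in>{L\<in>Pow K. card L = 2}. Q (\<Sum>k\<in>L. b k) + (\<Sum>k\<in>L. Q (b k)))"
  using fin
proof (induction K rule: finite_induct)
  case empty
  have "{L\<in>Pow {}. card L = 2} = ({} :: nat set set)" by auto
  then show ?case using Q0 by simp
next
  case (insert a K)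
  have Bsum: "B (\<Sum>k\<in>K. b k) y = (\<Sum>k\<in>K. B (b k) y)" for y
    using insert(1) by (induction K rule: finite_induct) (simp_all add: B0 Badd)
  have BQ: "B x y = Q (x + y) + Q x + Q y" for x y
  proof -
    have "Q (x + y) + Q x + Q y = B x y + (Q x + Q x) + (Q y + Q y)"
      unfolding QB[of x y] Q0 by (simp only: add_ac add_0_right add_0_left)
    then show ?thesis by (simp only: bit_add_self add_0_right)
  qed
  have disj: "{L\<in>Pow K. card L = 2} \<inter> (\<lambda>k. {k, a}) ` K = {}" using insert(2) by auto
  have inj: "inj_on (\<lambda>k. {k, a}) K" using insert(2) unfolding inj_on_def by (auto simp: doubleton_eq_iff)
  have fpairs: "finite {L\<in>Pow K. card L = 2}" using insert(1) by simp
  define f where "f L = Q (\<Sum>k\<in>L. b k) + (\<Sum>k\<in>L. Q (b k))" for L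
  have fk: "f {k, a} = B (b k) (b a)" if "k \<in> K" for k
  proof -
    have "k \<noteq> a" using that insert(2) by auto
    then show ?thesis unfolding f_def BQ by (simp only: sum_two[OF \<open>k \<noteq> a\<close>] add_ac)
  qed
  have "(\<Sum>L\<in>{L\<in>Pow (insert a K). card L = 2}. f L) = (\<Sum>L\<in>{L\<in>Pow K. card L = 2}. f L) + (\<Sum>L\<in>(\<lambda>k. {k, a}) ` K. f L)"
    unfolding pairs_insert[OF insert(2)] by (rule sum.union_disjoint) (use fpairs insert(1) disj in auto)
  also have "(\<Sum>L\<in>(\<lambda>k. {k, a}) ` K. f L) = (\<Sum>k\<in>K. f {k, a})"
    by (rule sum.reindex[OF inj, unfolded comp_def])
  also have "\<dots> = (\<Sum>k\<in>K. B (b k) (b a))" by (rule sum.cong) (simp_all add: fk)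
  also have "\<dots> = B (\<Sum>k\<in>K. b k) (b a)" by (simp add: Bsum)
  finally have P: "(\<Sum>L\<in>{L\<in>Pow (insert a K). card L = 2}. f L) = (\<Sum>L\<in>{L\<in>Pow K. card L = 2}. f L) + B (\<Sum>k\<in>K. b k) (b a)" .
  have "Q (\<Sum>k\<in>insert a K. b k) = Q ((\<Sum>k\<in>K. b k) + b a)"
    using insert by (simp add: add.commute)
  also have "\<dots> = Q (\<Sum>k\<in>K. b k) + Q (b a) + B (\<Sum>k\<in>K. b k) (b a)" unfolding QB Q0 by (simp only: add_0_right)
  also have "Q (\<Sum>k\<in>K. b k) = (\<Sum>k\<in>K. Q (b k)) + (\<Sum>L\<in>{L\<in>Pow K. card L = 2}. f L)"
    unfolding f_def by (rule insert.IH)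
  finally have "Q (\<Sum>k\<in>insert a K. b k) = ((\<Sum>k\<in>K. Q (b k)) + (\<Sum>L\<in>{L\<in>Pow K. card L = 2}. f L)) + Q (b a) + B (\<Sum>k\<in>K. b k) (b a)" .
  then show ?case unfolding f_def[symmetric] sum.insert[OF insert(1,2)] P by (simp only: add_ac)
qed


lemma i_pow_mod4: "\<i> ^ a = \<i> ^ (a mod 4)"
proof -
  have "\<i> ^ a = \<i> ^ (4 * (a div 4) + a mod 4)" by simp
  also have "\<dots> = (\<i> ^ 4) ^ (a div 4) * \<i> ^ (a mod 4)" by (simp only: power_add power_mult)
  also have "\<i> ^ 4 = (1::complex)" by (simp add: power4_eq_xxxx)
  finally show ?thesis by simp
qed

theorem mainTheorem3:
  fixes S :: "(bit ^ 'n) set" and Q :: "bit ^ 'n \<Rightarrow> bit" and c :: "'n \<Rightarrow> complex"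
  assumes "F2_subspace S"
    and "F2_dim S \<le> 5"
    and "is_quadratic Q"
    and "\<forall>j. cmod (c j) = 1"
    and "\<forall>x\<in>S. (-1::complex) ^ (of_bit (Q x) :: nat) = (\<Prod>j\<in>UNIV. c j ^ (of_bit (x $ j) :: nat))"
  shows "\<exists>c' :: 'n \<Rightarrow> complex. (\<forall>j. c' j \<in> {1, -1, \<i>, -\<i>}) \<and>
           (\<forall>x\<in>S. (-1::complex) ^ (of_bit (Q x) :: nat) = (\<Prod>j\<in>UNIV. c' j ^ (of_bit (x $ j) :: nat)))"
proof -
  obtain b where ech: "ech 5 b" and SSb: "SS b 5 = S" using S_repr[OF assms(1,2)] by blast
  define p where "p j = {k. k < 5 \<and> b k $ j = 1}" for j
  define xK where "xK K = (\<Sum>k\<in>K. b k)" for K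
  have xS: "xK K \<in> S" if "K \<subseteq> {..<5}" for K using SS_intro[OF that, of b] SSb unfolding xK_def by simp
  have allS: "\<exists>K\<subseteq>{..<5}. x = xK K" if "x \<in> S" for x using SS_elim[of x b 5] that SSb unfolding xK_def by simp
  have par: "odd (xK K $ j) \<longleftrightarrow> odd (card (K \<inter> p j))" if "K \<subseteq> {..<5}" for K j
  proof -
    have "K \<inter> {k. b k $ j = 1} = K \<inter> p j" using that unfolding p_def by auto
    then show ?thesis using comp_parity[of K b j] finite_subset[OF that] unfolding xK_def by simp
  qed
  have p5: "p j \<subseteq> {..<5}" for j unfolding p_def by auto
  have piv: "(\<exists>j. p j = {k}) \<or> (\<forall>j. k \<notin> p j)" if "k < 5" for k
  proof -
    from ech that have "b k = 0 \<or> (\<exists>j. b k $ j = 1 \<and> (\<forall>l<5. l \<noteq> k \<longrightarrow> b l $ j = 0))"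
      unfolding ech_def by blast
    then show ?thesis
    proof
      assume "b k = 0" then have "\<forall>j. k \<notin> p j" unfolding p_def by simp
      then show ?thesis ..
    next
      assume "\<exists>j. b k $ j = 1 \<and> (\<forall>l<5. l \<noteq> k \<longrightarrow> b l $ j = 0)"
      then obtain j where j: "b k $ j = 1" "\<forall>l<5. l \<noteq> k \<longrightarrow> b l $ j = 0" by blast
      have "p j = {k}" unfolding p_def using j that by auto
      then show ?thesis by blast
    qed
  qed
  define th where "th j = Arg (c j)" for j
  have cexp: "c j = exp (\<i> * of_real (th j))" for j
  proof -
    have "c j = rcis (cmod (c j)) (Arg (c j))" by (simp add: rcis_cmod_Arg)
    then show ?thesis using assms(4) by (simp add: rcis_def cis_conv_exp th_def)
  qed
  define t where "t j = 2 * th j / pi" for j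
  define q where "q K = (of_bit (Q (xK K)) :: int)" for K
  have hyp: "inZ 4 ((\<Sum>j\<in>UNIV. t j * of_bool (odd (card (K \<inter> p j)))) - 2 * of_int (q K))"
    if K: "K \<subseteq> {..<5}" for K
  proof -
    define m where "m j = (of_bit (xK K $ j) :: nat)" for j
    define mq where "mq = (of_bit (Q (xK K)) :: nat)"
    have eq: "(-1::complex) ^ mq = (\<Prod>j\<in>UNIV. c j ^ m j)"
      using assms(5) xS[OF K] unfolding m_def mq_def by blast
    have l: "(-1::complex) ^ mq = exp (\<i> * of_real (of_nat mq * pi))"
    proof -
      have "(-1::complex) ^ mq = exp (\<i> * of_real pi) ^ mq" by (simp add: exp_pi_i')
      also have "\<dots> = exp (of_nat mq * (\<i> * of_real pi))" by (rule exp_of_nat_mult[symmetric])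
      finally show ?thesis by (simp add: mult_ac)
    qed
    have r: "(\<Prod>j\<in>UNIV. c j ^ m j) = exp (\<i> * of_real (\<Sum>j\<in>UNIV. of_nat (m j) * th j))"
    proof -
      have "(\<Prod>j\<in>UNIV. c j ^ m j) = (\<Prod>j\<in>UNIV. exp (of_nat (m j) * (\<i> * of_real (th j))))"
        by (rule prod.cong[OF refl]) (simp add: cexp exp_of_nat_mult)
      also have "\<dots> = exp (\<Sum>j\<in>UNIV. of_nat (m j) * (\<i> * of_real (th j)))"
        by (rule exp_sum[symmetric]) simp
      also have "(\<Sum>j\<in>UNIV. of_nat (m j) * (\<i> * of_real (th j))) = \<i> * of_real (\<Sum>j\<in>UNIV. of_nat (m j) * th j)"
        by (simp add: sum_distrib_left of_real_sum mult_ac)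
      finally show ?thesis .
    qed
    from eq l r obtain N where N: "\<i> * of_real (\<Sum>j\<in>UNIV. of_nat (m j) * th j)
        = \<i> * of_real (of_nat mq * pi) + of_real (of_int (2 * N) * pi) * \<i>"
      using exp_eq by metis
    have NR: "(\<Sum>j\<in>UNIV. of_nat (m j) * th j) = of_nat mq * pi + of_int (2 * N) * pi"
    proof -
      define S0 where "S0 = (\<Sum>j\<in>UNIV. of_nat (m j) * th j)"
      define a where "a = of_nat mq * pi"
      define b' where "b' = of_int (2 * N) * pi"
      have "\<i> * complex_of_real S0 = \<i> * (complex_of_real a + complex_of_real b')"
        using N unfolding S0_def[symmetric] a_def[symmetric] b'_def[symmetric]
        by (simp only: distrib_left mult.commute[of _ \<i>])
      then have "complex_of_real S0 = complex_of_real (a + b')" by simp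
      then have "S0 = a + b'" by (simp only: of_real_eq_iff)
      then show ?thesis unfolding S0_def a_def b'_def .
    qed
    have mj: "of_bool (odd (card (K \<inter> p j))) = (of_nat (m j) :: real)" for j
      unfolding m_def using par[OF K, of j] by simp
    have "(\<Sum>j\<in>UNIV. t j * of_bool (odd (card (K \<inter> p j)))) = (\<Sum>j\<in>UNIV. (2 / pi) * (of_nat (m j) * th j))"
      unfolding mj t_def by (rule sum.cong[OF refl]) (simp add: field_simps)
    also have "\<dots> = (2 / pi) * (\<Sum>j\<in>UNIV. of_nat (m j) * th j)" by (rule sum_distrib_left[symmetric])
    also have "\<dots> = (2 / pi) * (of_nat mq * pi + of_int (2 * N) * pi)" unfolding NR ..
    also have "\<dots> = 2 * of_nat mq + 4 * of_int N" by (simp add: field_simps)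
    finally have "(\<Sum>j\<in>UNIV. t j * of_bool (odd (card (K \<inter> p j)))) - 2 * of_int (q K) = 4 * of_int N"
      unfolding q_def mq_def by simp
    then show ?thesis unfolding inZ_def by blast
  qed
  obtain B where QB: "\<And>x y. Q (x + y) = Q x + Q y + Q 0 + B x y"
    and Badd: "\<And>x x' y. B (x + x') y = B x y + B x' y" and B0: "\<And>y. B 0 y = 0"
    using quad_bil[OF assms(3)] by blast
  have Q0: "Q 0 = 0"
  proof -
    have "(0::bit^'n) \<in> S" using xS[of "{}"] unfolding xK_def by simp
    then have "(-1::complex) ^ (of_bit (Q 0) :: nat) = 1" using assms(5) by simp
    then show ?thesis by (cases "Q 0") simp_all
  qed
  have quad: "even (q K - (\<Sum>k\<in>K. q {k}) - (\<Sum>L\<in>{L\<in>Pow K. card L = 2}. q L - (\<Sum>k\<in>L. q {k})))"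
    if K: "K \<subseteq> {..<5}" for K
  proof -
    have finK: "finite K" using K finite_subset by blast
    have xk1: "xK {k} = b k" for k unfolding xK_def by simp
    define P2 where "P2 = {L\<in>Pow K. card L = 2}"
    have finP2: "\<And>L. L \<in> P2 \<Longrightarrow> finite L" unfolding P2_def using finK finite_subset by blast
    have Qs: "Q (xK K) = (\<Sum>k\<in>K. Q (xK {k})) + (\<Sum>L\<in>P2. Q (xK L) + (\<Sum>k\<in>L. Q (xK {k})))"
      unfolding xk1 unfolding xK_def P2_def by (rule Q_sum[OF QB Badd B0 Q0 finK])
    have "even (Q (xK K) + ((\<Sum>k\<in>K. Q (xK {k})) + (\<Sum>L\<in>P2. Q (xK L) + (\<Sum>k\<in>L. Q (xK {k})))))"
      unfolding Qs[symmetric] by (simp only: bit_add_self) simp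
    moreover have "even (Q (xK K) + ((\<Sum>k\<in>K. Q (xK {k})) + (\<Sum>L\<in>P2. Q (xK L) + (\<Sum>k\<in>L. Q (xK {k})))))
       \<longleftrightarrow> even (q K + ((\<Sum>k\<in>K. q {k}) + (\<Sum>L\<in>P2. q L + (\<Sum>k\<in>L. q {k}))))"
    proof -
      have a: "even (Q (xK L)) \<longleftrightarrow> even (q L)" for L unfolding q_def by simp
      have b: "even (\<Sum>k\<in>L. Q (xK {k})) \<longleftrightarrow> even (\<Sum>k\<in>L. q {k})" for L
        by (rule parity_sum_transfer) (rule a)
      have c: "even (\<Sum>L\<in>P2. Q (xK L) + (\<Sum>k\<in>L. Q (xK {k}))) \<longleftrightarrow> even (\<Sum>L\<in>P2. q L + (\<Sum>k\<in>L. q {k}))"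
        by (rule parity_sum_transfer) (simp only: even_add a b)
      show ?thesis using a[of K] b[of K] c by (simp only: even_add)
    qed
    ultimately have evX: "even (q K + ((\<Sum>k\<in>K. q {k}) + (\<Sum>L\<in>P2. q L + (\<Sum>k\<in>L. q {k}))))" by simp
    have eqY: "(q K - (\<Sum>k\<in>K. q {k}) - (\<Sum>L\<in>P2. q L - (\<Sum>k\<in>L. q {k})))
      = (q K + ((\<Sum>k\<in>K. q {k}) + (\<Sum>L\<in>P2. q L + (\<Sum>k\<in>L. q {k})))) - 2 * ((\<Sum>k\<in>K. q {k}) + (\<Sum>L\<in>P2. q L))"
      by (simp add: sum_subtractf sum.distrib algebra_simps)
    have "even ((q K + ((\<Sum>k\<in>K. q {k}) + (\<Sum>L\<in>P2. q L + (\<Sum>k\<in>L. q {k})))) - 2 * ((\<Sum>k\<in>K. q {k}) + (\<Sum>L\<in>P2. q L)))"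
      by (rule dvd_diff[OF evX]) simp
    then show ?thesis unfolding P2_def[symmetric] eqY .
  qed
  obtain n where n: "\<forall>K\<subseteq>{..<5}. 4 dvd ((\<Sum>j\<in>UNIV. n j * of_bool (odd (card (K \<inter> p j)))) - 2 * q K)"
    using core[OF p5 piv hyp quad] by blast
  define c' where "c' j = \<i> ^ nat (n j mod 4)" for j
  show ?thesis
  proof (intro exI conjI allI ballI)
    fix j
    have "nat (n j mod 4) < 4" by simp
    then have "nat (n j mod 4) = 0 \<or> nat (n j mod 4) = 1 \<or> nat (n j mod 4) = 2 \<or> nat (n j mod 4) = 3" by linarith
    then show "c' j \<in> {1, -1, \<i>, -\<i>}" unfolding c'_def by (auto simp: eval_nat_numeral)
  next
    fix x assume "x \<in> S"
    then obtain K where K: "K \<subseteq> {..<5}" and x: "x = xK K" using allS by blast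
    define m where "m j = (of_bit (xK K $ j) :: nat)" for j
    define A where "A = (\<Sum>j\<in>UNIV. nat (n j mod 4) * m j)"
    define Bn where "Bn = 2 * (of_bit (Q (xK K)) :: nat)"
    have prodA: "(\<Prod>j\<in>UNIV. c' j ^ m j) = \<i> ^ A"
      unfolding A_def c'_def by (simp add: power_sum power_mult)
    have lhsB: "(-1::complex) ^ (of_bit (Q (xK K)) :: nat) = \<i> ^ Bn"
      unfolding Bn_def by (simp add: power_mult)
    have "int A mod 4 = int Bn mod 4"
    proof -
      have mm: "int (m j) = of_bool (odd (card (K \<inter> p j)))" for j unfolding m_def using par[OF K, of j] by simp
      have "int A = (\<Sum>j\<in>UNIV. (n j mod 4) * of_bool (odd (card (K \<inter> p j))))"
        unfolding A_def by (simp add: of_nat_sum mm)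
      then have "int A mod 4 = (\<Sum>j\<in>UNIV. ((n j mod 4) * of_bool (odd (card (K \<inter> p j)))) mod 4) mod 4"
        by (simp add: mod_sum_eq)
      also have "\<dots> = (\<Sum>j\<in>UNIV. (n j * of_bool (odd (card (K \<inter> p j)))) mod 4) mod 4"
        by (simp add: mod_mult_left_eq)
      also have "\<dots> = (\<Sum>j\<in>UNIV. n j * of_bool (odd (card (K \<inter> p j)))) mod 4"
        by (simp add: mod_sum_eq)
      also have "\<dots> = (2 * q K) mod 4" using n K by (simp add: mod_eq_dvd_iff)
      also have "2 * q K = int Bn" unfolding Bn_def q_def by simp
      finally show ?thesis .
    qed
    then have "int (A mod 4) = int (Bn mod 4)" by (simp add: zmod_int)
    then have "A mod 4 = Bn mod 4" by (simp only: of_nat_eq_iff)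
    then have "\<i> ^ A = \<i> ^ Bn" by (metis i_pow_mod4)
    then show "(-1::complex) ^ (of_bit (Q x) :: nat) = (\<Prod>j\<in>UNIV. c' j ^ (of_bit (x $ j) :: nat))"
      using prodA lhsB unfolding x m_def by simp
  qed
qed


end
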